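(* Consider the golf process on $\mathbb{Z}$ with parameters $\rho_b<\rho_h$ and $p\in[0,1]$. Then almost surely every separator of the initial configuration belongs to the set $H^1$ of holes free at time $1$; in particular, almost surely $H^1$ contains infinitely many holes to the left and infinitely many to the right of $0$.
   Context: Golf process on $\mathbb{Z}$: initial states $(\eta^0_x)$ i.i.d., equal to $1$ (ball) with probability $\rho_b$, $-1$ (hole) with probability $\rho_h$, $0$ (neutral) otherwise ($\rho_b+\rho_h\le1$); clocks i.i.d. uniform on $[0,1]$; at its clock time each ball performs an independent random walk (step $+1$ w.p. $p$, $-1$ w.p. $1-p$) from its vertex, stopped at the first currently free hole, which it fills. A vertex $v$ is a separator if $\eta^0_v=-1$, $\sum_{j=k}^{v-1}\eta^0_j\le0$ for all $k<v$, and $\sum_{j=v+1}^{k}\eta^0_j\le0$ for all $k>v$. *)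

theory Defs
  imports "HOL-Probability.Probability"
begin

text \<open>A sample point assigns to each vertex x of Z a triple
  (initial state, clock time, step sequence of its random walk).
  State 1 = ball, -1 = hole, 0 = neutral. Step True = +1, False = -1.\<close>

type_synonym golf_omega = "int \<Rightarrow> int \<times> real \<times> (nat \<Rightarrow> bool)"

definition state_law :: "real \<Rightarrow> real \<Rightarrow> int measure" where
  "state_law \<rho>b \<rho>h = measure_pmf (embed_pmf (\<lambda>s::int.
      if s = 1 then \<rho>b else if s = -1 then \<rho>h else if s = 0 then 1 - \<rho>b - \<rho>h else 0))"

definition clock_law :: "real measure" where
  "clock_law = uniform_measure lborel {0..1}"

definition walk_law :: "real \<Rightarrow> (nat \<Rightarrow> bool) measure" where
  "walk_law p = PiM UNIV (\<lambda>_::nat. measure_pmf (bernoulli_pmf p))"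

definition site_law :: "real \<Rightarrow> real \<Rightarrow> real \<Rightarrow> (int \<times> real \<times> (nat \<Rightarrow> bool)) measure" where
  "site_law \<rho>b \<rho>h p = state_law \<rho>b \<rho>h \<Otimes>\<^sub>M (clock_law \<Otimes>\<^sub>M walk_law p)"

definition golf_space :: "real \<Rightarrow> real \<Rightarrow> real \<Rightarrow> golf_omega measure" where
  "golf_space \<rho>b \<rho>h p = PiM UNIV (\<lambda>_::int. site_law \<rho>b \<rho>h p)"

definition eta :: "golf_omega \<Rightarrow> int \<Rightarrow> int" where
  "eta \<omega> x = fst (\<omega> x)"

definition clk :: "golf_omega \<Rightarrow> int \<Rightarrow> real" where
  "clk \<omega> x = fst (snd (\<omega> x))"

definition steps :: "golf_omega \<Rightarrow> int \<Rightarrow> nat \<Rightarrow> bool" where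
  "steps \<omega> x = snd (snd (\<omega> x))"

definition walk_pos :: "golf_omega \<Rightarrow> int \<Rightarrow> nat \<Rightarrow> int" where
  "walk_pos \<omega> x k = x + (\<Sum>i<k. if steps \<omega> x i then 1 else -1)"

definition free_hole :: "golf_omega \<Rightarrow> int set \<Rightarrow> int \<Rightarrow> bool" where
  "free_hole \<omega> F y \<longleftrightarrow> eta \<omega> y = -1 \<and> y \<notin> F"

definition move_ball :: "golf_omega \<Rightarrow> int \<Rightarrow> int set \<Rightarrow> int set" where
  "move_ball \<omega> x F =
     (if \<exists>k. free_hole \<omega> F (walk_pos \<omega> x k)
      then insert (walk_pos \<omega> x (LEAST k. free_hole \<omega> F (walk_pos \<omega> x k))) F
      else F)"

text \<open>Finite-volume golf process: only the balls in [-n, n] are active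
  (holes everywhere), they move in increasing order of their clocks
  (ties, a null event, broken by position). Result: the set of holes filled by time 1.\<close>
definition filled_window :: "golf_omega \<Rightarrow> nat \<Rightarrow> int set" where
  "filled_window \<omega> n =
     fold (move_ball \<omega>) (sort_key (clk \<omega>) (filter (\<lambda>x. eta \<omega> x = 1) [- int n..int n])) {}"

text \<open>H^1: holes free at time 1 in the process on Z, obtained as the
  limit of the finite-volume processes.\<close>
definition H1 :: "golf_omega \<Rightarrow> int set" where
  "H1 \<omega> = {x. eta \<omega> x = -1 \<and> (\<forall>\<^sub>F n in sequentially. x \<notin> filled_window \<omega> n)}"

definition separator :: "golf_omega \<Rightarrow> int \<Rightarrow> bool" where
  "separator \<omega> v \<longleftrightarrow> eta \<omega> v = -1
     \<and> (\<forall>k<v. (\<Sum>j\<in>{k..v-1}. eta \<omega> j) \<le> 0)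
     \<and> (\<forall>k>v. (\<Sum>j\<in>{v+1..k}. eta \<omega> j) \<le> 0)"

end

theory Submission
  imports Defs
begin


definition mv :: "(int \<Rightarrow> bool) \<Rightarrow> (int \<Rightarrow> nat \<Rightarrow> int) \<Rightarrow> int \<Rightarrow> int set \<Rightarrow> int set" where
  "mv hole w x F = (if \<exists>k. hole (w x k) \<and> w x k \<notin> F
      then insert (w x (LEAST k. hole (w x k) \<and> w x k \<notin> F)) F else F)"

definition invL :: "(int \<Rightarrow> bool) \<Rightarrow> int \<Rightarrow> int set \<Rightarrow> int set \<Rightarrow> bool" where
  "invL hole v F S \<longleftrightarrow> (\<forall>a<v. ((hole (a-1) \<and> a-1 \<notin> F) \<or> (\<forall>y\<in>F\<union>S. a \<le> y)) \<longrightarrow>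
       card (F \<inter> {a..v-1}) \<le> card (S \<inter> {a..v-1}))"

lemma ivt_up:
  fixes f :: "nat \<Rightarrow> int"
  assumes step: "\<And>k. \<bar>f (Suc k) - f k\<bar> \<le> 1" and "i \<le> j" "f i \<le> y" "y \<le> f j"
  shows "\<exists>t. i \<le> t \<and> t \<le> j \<and> f t = y"
  using assms(2-4)
proof (induction j)
  case 0 then show ?case by auto
next
  case (Suc j)
  show ?case
  proof (cases "i = Suc j")
    case True then show ?thesis using Suc.prems by auto
  next
    case False
    then have ij: "i \<le> j" using Suc.prems by auto
    show ?thesis
    proof (cases "y \<le> f j")
      case True
      from Suc.IH[OF ij Suc.prems(2) True] show ?thesis by (metis le_SucI)
    next
      case False
      have "f (Suc j) \<le> f j + 1" using step[of j] by auto
      then have "f (Suc j) = y" using False Suc.prems(3) by auto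
      then show ?thesis using Suc.prems(1) by auto
    qed
  qed
qed

lemma hitL:
  fixes hole isb :: "int \<Rightarrow> bool" and w :: "int \<Rightarrow> nat \<Rightarrow> int"
  assumes w0: "\<And>x. w x 0 = x" and ws: "\<And>x k. \<bar>w x (Suc k) - w x k\<bar> \<le> 1"
    and finF: "finite F" and finS: "finite S"
    and Sb: "S \<subseteq> {y. isb y}"
    and xS: "x \<notin> S" and bx: "isb x"
    and hv: "hole v" and vF: "v \<notin> F" and xv: "x < v"
    and lc: "\<And>a. a < v \<Longrightarrow> card {j\<in>{a..v-1}. isb j} \<le> card {j\<in>{a..v-1}. hole j}"
    and inv: "invL hole v F S"
  shows "mv hole w x F \<subseteq> F \<union> {..<v} \<and> v \<notin> mv hole w x F"
proof (cases "\<exists>k. hole (w x k) \<and> w x k \<notin> F")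
  case False
  hence "mv hole w x F = F" unfolding mv_def by (intro if_not_P)
  then show ?thesis using vF by simp
next
  case True
  define P where "P k \<longleftrightarrow> hole (w x k) \<and> w x k \<notin> F" for k
  define k0 where "k0 = (LEAST k. P k)"
  have Pk0: "P k0" unfolding k0_def using True LeastI_ex[of P] P_def by blast
  have notP: "\<And>t. t < k0 \<Longrightarrow> \<not> P t" unfolding k0_def by (rule not_less_Least)
  define h where "h = w x k0"
  have mv_eq: "mv hole w x F = insert h F" using True by (simp add: mv_def h_def k0_def P_def)
  have hv': "h < v"
  proof (rule ccontr)
    assume "\<not> h < v"
    hence "v \<le> h" by simp
    then obtain t where t: "t \<le> k0" "w x t = v" using ivt_up[of "w x" 0 k0 v, OF ws] w0[of x] xv h_def by auto
    have "P t" using t hv vF P_def by auto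
    hence "t = k0" using notP t(1) by (meson le_less)
    hence hv2: "h = v" using t h_def by simp
    define m where "m = Min (w x ` {0..k0})"
    have mfin: "m \<in> w x ` {0..k0}" unfolding m_def by (intro Min_in) auto
    then obtain tm where tm: "tm \<le> k0" "w x tm = m" by auto
    have mle: "\<And>t. t \<le> k0 \<Longrightarrow> m \<le> w x t" unfolding m_def by (intro Min_le) auto
    have mx: "m \<le> x" using mle[of 0] w0[of x] by simp
    have visited: "hole y \<longrightarrow> y \<in> F" if y: "m \<le> y" "y \<le> v - 1" for y
    proof -
      obtain t where t: "tm \<le> t" "t \<le> k0" "w x t = y"
        using ivt_up[of "w x" tm k0 y, OF ws] tm y hv2 h_def by auto
      have "t \<noteq> k0" using t y hv2 h_def by auto
      hence "t < k0" using t by simp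
      from notP[OF this] show "hole y \<longrightarrow> y \<in> F" using t P_def by auto
    qed
    have "bdd_below (F \<union> S)" using finF finS by (intro bdd_below_finite) auto
    then obtain B where B: "\<And>y. y \<in> F \<union> S \<Longrightarrow> B \<le> y" unfolding bdd_below_def by blast
    define Q where "Q d \<longleftrightarrow> (hole (m - int d - 1) \<and> m - int d - 1 \<notin> F) \<or> (\<forall>y\<in>F\<union>S. m - int d \<le> y)" for d
    have "Q (nat (m - B))" unfolding Q_def using B by force
    define d where "d = (LEAST d. Q d)"
    have Qd: "Q d" unfolding d_def by (rule LeastI) fact
    have notQ: "\<And>d'. d' < d \<Longrightarrow> \<not> Q d'" unfolding d_def by (rule not_less_Least)
    define a where "a = m - int d"
    have av: "a < v" using a_def mx xv by simp
    have cnt: "card (F \<inter> {a..v-1}) \<le> card (S \<inter> {a..v-1})"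
      using inv av Qd unfolding invL_def Q_def a_def by blast
    have holesF: "{j\<in>{a..v-1}. hole j} \<subseteq> F \<inter> {a..v-1}"
    proof
      fix y assume y: "y \<in> {j\<in>{a..v-1}. hole j}"
      show "y \<in> F \<inter> {a..v-1}"
      proof (cases "m \<le> y")
        case True then show ?thesis using visited y by auto
      next
        case False
        define d' where "d' = nat (m - y - 1)"
        have "d' < d" using False y a_def d'_def by auto
        hence "\<not> Q d'" by (rule notQ)
        moreover have "m - int d' - 1 = y" using False d'_def by auto
        ultimately show ?thesis using y unfolding Q_def by auto
      qed
    qed
    have finb: "finite {j\<in>{a..v-1}. isb j}" by (rule finite_subset[of _ "{a..v-1}"]) auto
    have "card {j\<in>{a..v-1}. hole j} \<le> card (F \<inter> {a..v-1})" by (rule card_mono) (use holesF in auto)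
    also have "\<dots> \<le> card (S \<inter> {a..v-1})" by (rule cnt)
    also have "\<dots> < card (insert x (S \<inter> {a..v-1}))" using xS by (simp add: card_insert_if)
    also have "\<dots> \<le> card {j\<in>{a..v-1}. isb j}"
      by (rule card_mono[OF finb]) (use Sb bx mx a_def xv in auto)
    finally show False using lc[OF av] by simp
  qed
  show ?thesis using mv_eq hv' vF by auto
qed

lemma presL:
  fixes hole :: "int \<Rightarrow> bool" and w :: "int \<Rightarrow> nat \<Rightarrow> int"
  assumes w0: "\<And>x. w x 0 = x" and ws: "\<And>x k. \<bar>w x (Suc k) - w x k\<bar> \<le> 1"
    and xS: "x \<notin> S"
    and side: "(x < v \<and> mv hole w x F \<subseteq> F \<union> {..<v}) \<or> (v < x \<and> mv hole w x F \<subseteq> F \<union> {v<..})"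
    and inv: "invL hole v F S"
  shows "invL hole v (mv hole w x F) (insert x S)"
  unfolding invL_def
proof (intro allI impI)
  fix a assume av: "a < v" and C': "(hole (a-1) \<and> a-1 \<notin> mv hole w x F) \<or> (\<forall>y\<in>mv hole w x F \<union> insert x S. a \<le> y)"
  have sub: "F \<subseteq> mv hole w x F" by (auto simp: mv_def)
  have C: "(hole (a-1) \<and> a-1 \<notin> F) \<or> (\<forall>y\<in>F \<union> S. a \<le> y)" using C' sub by blast
  have old: "card (F \<inter> {a..v-1}) \<le> card (S \<inter> {a..v-1})" using inv av C unfolding invL_def by blast
  have Sle: "card (S \<inter> {a..v-1}) \<le> card (insert x S \<inter> {a..v-1})" by (rule card_mono) auto
  show "card (mv hole w x F \<inter> {a..v-1}) \<le> card (insert x S \<inter> {a..v-1})"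
  proof (cases "\<exists>k. hole (w x k) \<and> w x k \<notin> F")
    case False
    hence "mv hole w x F = F" unfolding mv_def by (intro if_not_P)
    then show ?thesis using old Sle by simp
  next
    case True
    define P where "P k \<longleftrightarrow> hole (w x k) \<and> w x k \<notin> F" for k
    define k0 where "k0 = (LEAST k. P k)"
    have Pk0: "P k0" unfolding k0_def using True LeastI_ex[of P] P_def by blast
    have notP: "\<And>t. t < k0 \<Longrightarrow> \<not> P t" unfolding k0_def by (rule not_less_Least)
    define h where "h = w x k0"
    have mv_eq: "mv hole w x F = insert h F" using True by (simp add: mv_def h_def k0_def P_def)
    have hF: "h \<notin> F" using Pk0 P_def h_def by auto
    show ?thesis
    proof (cases "h \<in> {a..v-1}")
      case False
      then have "mv hole w x F \<inter> {a..v-1} = F \<inter> {a..v-1}" using mv_eq by auto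
      then show ?thesis using old Sle by simp
    next
      case True
      then have "h < v" by simp
      hence xv: "x < v" using side mv_eq hF by auto
      have ax: "a \<le> x"
      proof (rule ccontr)
        assume "\<not> a \<le> x"
        hence xa: "x < a" by simp
        from C' show False
        proof
          assume fr: "hole (a-1) \<and> a-1 \<notin> mv hole w x F"
          obtain t where t: "t \<le> k0" "w x t = a - 1"
            using ivt_up[of "w x" 0 k0 "a-1", OF ws] w0[of x] xa True h_def by auto
          have "t \<noteq> k0" using t True h_def by auto
          hence "t < k0" using t by simp
          moreover have "P t" unfolding P_def using t fr sub by auto
          ultimately show False using notP by blast
        next
          assume "\<forall>y\<in>mv hole w x F \<union> insert x S. a \<le> y"
          thus False using xa by auto
        qed
      qed
      have e1: "mv hole w x F \<inter> {a..v-1} = insert h (F \<inter> {a..v-1})" using mv_eq True by auto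
      have e2: "insert x S \<inter> {a..v-1} = insert x (S \<inter> {a..v-1})" using ax xv by auto
      show ?thesis using old hF xS e1 e2 by (simp add: card_insert_if)
    qed
  qed
qed

lemma neg_mem: "(- a \<in> uminus ` F) = (a \<in> (F::int set))"
  by force

lemma mv_mirror:
  "mv (\<lambda>y. hole (-y)) (\<lambda>x k. - w (-x) k) (-x) (uminus ` F) = uminus ` mv hole w x F"
proof (cases "\<exists>k. hole (w x k) \<and> w x k \<notin> F")
  case True
  have e: "(\<lambda>k. hole (- (- w (- (- x)) k)) \<and> - w (- (- x)) k \<notin> uminus ` F) = (\<lambda>k. hole (w x k) \<and> w x k \<notin> F)"
    by (simp add: neg_mem)
  show ?thesis using True unfolding mv_def e by simp
next
  case False
  have e: "(\<lambda>k. hole (- (- w (- (- x)) k)) \<and> - w (- (- x)) k \<notin> uminus ` F) = (\<lambda>k. hole (w x k) \<and> w x k \<notin> F)"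
    by (simp add: neg_mem)
  have "mv hole w x F = F" using False unfolding mv_def by (intro if_not_P)
  moreover have "mv (\<lambda>y. hole (-y)) (\<lambda>x k. - w (-x) k) (-x) (uminus ` F) = uminus ` F"
    unfolding mv_def e using False by (intro if_not_P)
  ultimately show ?thesis by simp
qed

lemma mv_holes: "F \<subseteq> {y. hole y} \<Longrightarrow> mv hole w x F \<subseteq> {y. hole y}"
proof (cases "\<exists>k. hole (w x k) \<and> w x k \<notin> F")
  case True
  assume F: "F \<subseteq> {y. hole y}"
  from LeastI_ex[OF True] have "hole (w x (LEAST k. hole (w x k) \<and> w x k \<notin> F))" by blast
  then show ?thesis using True F unfolding mv_def by simp
next
  case False
  assume F: "F \<subseteq> {y. hole y}"
  have "mv hole w x F = F" using False unfolding mv_def by (intro if_not_P)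
  then show ?thesis using F by simp
qed

lemma mv_finite: "finite F \<Longrightarrow> finite (mv hole w x F)"
  by (simp add: mv_def)

definition Inv where "Inv hole isb v F S \<longleftrightarrow> finite F \<and> finite S \<and> F \<subseteq> {y. hole y} \<and> S \<subseteq> {y. isb y}
   \<and> v \<notin> F \<and> invL hole v F S \<and> invL (\<lambda>y. hole (-y)) (-v) (uminus ` F) (uminus ` S)"

lemma Inv_empty: "Inv hole isb v {} {}" by (simp add: Inv_def invL_def)

lemma neg_filter_interval: "{j\<in>{a..b}. P (- j)} = uminus ` {j\<in>{-b..-a}. (P::int\<Rightarrow>bool) j}"
proof
  show "{j \<in> {a..b}. P (- j)} \<subseteq> uminus ` {j \<in> {- b..- a}. P j}"
  proof
    fix j assume "j \<in> {j \<in> {a..b}. P (- j)}"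
    then have "-j \<in> {j \<in> {- b..- a}. P j}" by auto
    then show "j \<in> uminus ` {j \<in> {- b..- a}. P j}" by (metis image_eqI minus_minus)
  qed
qed auto

lemma card_neg_filter: "card {j\<in>{a..b}. P (- j)} = card {j\<in>{-b..-a}. (P::int\<Rightarrow>bool) j}"
  unfolding neg_filter_interval by (rule card_image) (auto simp: inj_on_def)

lemma step_inv:
  fixes hole isb :: "int \<Rightarrow> bool" and w :: "int \<Rightarrow> nat \<Rightarrow> int"
  assumes w0: "\<And>x. w x 0 = x" and ws: "\<And>x k. \<bar>w x (Suc k) - w x k\<bar> \<le> 1"
    and disj: "\<And>y. \<not> (hole y \<and> isb y)" and hv: "hole v"
    and lc: "\<And>a. a < v \<Longrightarrow> card {j\<in>{a..v-1}. isb j} \<le> card {j\<in>{a..v-1}. hole j}"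
    and rc: "\<And>b. v < b \<Longrightarrow> card {j\<in>{v+1..b}. isb j} \<le> card {j\<in>{v+1..b}. hole j}"
    and I: "Inv hole isb v F S" and bx: "isb x" and xS: "x \<notin> S"
  shows "Inv hole isb v (mv hole w x F) (insert x S)"
proof -
  from I have finF: "finite F" and finS: "finite S" and Fh: "F \<subseteq> {y. hole y}"
    and Sb: "S \<subseteq> {y. isb y}" and vF: "v \<notin> F" and iL: "invL hole v F S"
    and iR: "invL (\<lambda>y. hole (-y)) (-v) (uminus ` F) (uminus ` S)"
    unfolding Inv_def by auto
  define hole' where "hole' = (\<lambda>y::int. hole (-y))"
  define isb' where "isb' = (\<lambda>y::int. isb (-y))"
  define w' where "w' = (\<lambda>x k. - w (-x) k)"
  have w0': "\<And>x. w' x 0 = x" unfolding w'_def using w0 by simp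
  have ws': "\<bar>w' x (Suc k) - w' x k\<bar> \<le> 1" for x k
  proof -
    have "\<bar>w' x (Suc k) - w' x k\<bar> = \<bar>w (-x) (Suc k) - w (-x) k\<bar>" unfolding w'_def by simp
    then show ?thesis using ws[of "-x" k] by simp
  qed
  have lc': "card {j\<in>{a..-v-1}. isb' j} \<le> card {j\<in>{a..-v-1}. hole' j}" if "a < -v" for a
  proof -
    have "card {j\<in>{a..-v-1}. isb' j} = card {j\<in>{v+1..-a}. isb j}"
      unfolding isb'_def card_neg_filter by (simp add: add.commute)
    also have "\<dots> \<le> card {j\<in>{v+1..-a}. hole j}" using rc[of "-a"] that by simp
    also have "\<dots> = card {j\<in>{a..-v-1}. hole' j}"
      unfolding hole'_def card_neg_filter by (simp add: add.commute)
    finally show ?thesis .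
  qed
  have xv: "x \<noteq> v" using disj bx hv by auto
  have mir: "mv hole' w' (-x) (uminus ` F) = uminus ` mv hole w x F"
    unfolding hole'_def w'_def by (rule mv_mirror)
  have side: "(x < v \<and> mv hole w x F \<subseteq> F \<union> {..<v} \<and> v \<notin> mv hole w x F)
      \<or> (v < x \<and> mv hole w x F \<subseteq> F \<union> {v<..} \<and> v \<notin> mv hole w x F)"
  proof (cases "x < v")
    case True
    then show ?thesis using hitL[OF w0 ws finF finS Sb xS bx hv vF True lc iL] by auto
  next
    case False
    hence vx: "v < x" using xv by simp
    have "mv hole' w' (-x) (uminus ` F) \<subseteq> uminus ` F \<union> {..<-v} \<and> -v \<notin> mv hole' w' (-x) (uminus ` F)"
    proof (rule hitL[OF w0' ws'])
      show "finite (uminus ` F)" "finite (uminus ` S)" using finF finS by auto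
      show "uminus ` S \<subseteq> {y. isb' y}" using Sb unfolding isb'_def by auto
      show "-x \<notin> uminus ` S" using xS by (simp add: neg_mem)
      show "isb' (-x)" "hole' (-v)" using bx hv unfolding isb'_def hole'_def by auto
      show "-v \<notin> uminus ` F" using vF by (simp add: neg_mem)
      show "-x < -v" using vx by simp
      show "invL hole' (- v) (uminus ` F) (uminus ` S)" using iR unfolding hole'_def .
    qed (rule lc')
    then have A: "uminus ` mv hole w x F \<subseteq> uminus ` F \<union> {..<-v}" and B: "-v \<notin> uminus ` mv hole w x F"
      unfolding mir by auto
    have "mv hole w x F \<subseteq> F \<union> {v<..}"
    proof
      fix y assume "y \<in> mv hole w x F"
      then have "-y \<in> uminus ` F \<union> {..<-v}" using A by auto
      then show "y \<in> F \<union> {v<..}" by (auto simp: neg_mem)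
    qed
    moreover have "v \<notin> mv hole w x F" using B by (simp add: neg_mem)
    ultimately show ?thesis using vx by auto
  qed
  have L: "invL hole v (mv hole w x F) (insert x S)"
    by (rule presL[OF w0 ws xS _ iL]) (use side in auto)
  have side': "(-x < -v \<and> mv hole' w' (-x) (uminus ` F) \<subseteq> uminus ` F \<union> {..< -v})
     \<or> (-v < -x \<and> mv hole' w' (-x) (uminus ` F) \<subseteq> uminus ` F \<union> {-v<..})"
  proof (cases "x < v")
    case True
    then have "mv hole w x F \<subseteq> F \<union> {..<v}" using side by auto
    then have "uminus ` mv hole w x F \<subseteq> uminus ` F \<union> {-v<..}" by auto
    then show ?thesis unfolding mir using True by auto
  next
    case False
    then have "mv hole w x F \<subseteq> F \<union> {v<..}" "v < x" using side by auto
    then have "uminus ` mv hole w x F \<subseteq> uminus ` F \<union> {..<-v}" "-x < -v" by auto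
    then show ?thesis unfolding mir by auto
  qed
  have R0: "invL hole' (-v) (mv hole' w' (-x) (uminus ` F)) (insert (-x) (uminus ` S))"
    by (rule presL[OF w0' ws' _ side']) (use xS iR in \<open>auto simp: neg_mem hole'_def\<close>)
  have R: "invL (\<lambda>y. hole (-y)) (-v) (uminus ` mv hole w x F) (uminus ` insert x S)"
    using R0[unfolded mir] unfolding hole'_def by simp
  show ?thesis unfolding Inv_def
    using L R finF finS mv_finite mv_holes[OF Fh] Sb bx side by auto
qed

lemma fold_inv:
  fixes hole isb :: "int \<Rightarrow> bool" and w :: "int \<Rightarrow> nat \<Rightarrow> int"
  assumes w0: "\<And>x. w x 0 = x" and ws: "\<And>x k. \<bar>w x (Suc k) - w x k\<bar> \<le> 1"
    and disj: "\<And>y. \<not> (hole y \<and> isb y)" and hv: "hole v"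
    and lc: "\<And>a. a < v \<Longrightarrow> card {j\<in>{a..v-1}. isb j} \<le> card {j\<in>{a..v-1}. hole j}"
    and rc: "\<And>b. v < b \<Longrightarrow> card {j\<in>{v+1..b}. isb j} \<le> card {j\<in>{v+1..b}. hole j}"
  shows "distinct xs \<Longrightarrow> set xs \<subseteq> {y. isb y} \<Longrightarrow> set xs \<inter> S = {} \<Longrightarrow> Inv hole isb v F S
     \<Longrightarrow> Inv hole isb v (fold (mv hole w) xs F) (S \<union> set xs)"
proof (induction xs arbitrary: F S)
  case Nil then show ?case by simp
next
  case (Cons x xs)
  have I1: "Inv hole isb v (mv hole w x F) (insert x S)"
    by (rule step_inv[OF w0 ws disj hv lc rc Cons.prems(4)]) (use Cons.prems in auto)
  have "Inv hole isb v (fold (mv hole w) xs (mv hole w x F)) (insert x S \<union> set xs)"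
    by (rule Cons.IH[OF _ _ _ I1]) (use Cons.prems in auto)
  then show ?case by simp
qed



lemma move_ball_eq: "move_ball \<omega> = mv (\<lambda>y. eta \<omega> y = -1) (walk_pos \<omega>)"
  by (intro ext) (simp only: move_ball_def mv_def free_hole_def)

lemma sum_card:
  fixes f :: "int \<Rightarrow> int"
  assumes "finite A" "\<forall>j\<in>A. f j \<in> {-1,0,1}"
  shows "(\<Sum>j\<in>A. f j) = int (card {j\<in>A. f j = 1}) - int (card {j\<in>A. f j = -1})"
  using assms
proof (induction A rule: finite_induct)
  case empty then show ?case by simp
next
  case (insert x A)
  have fx: "f x \<in> {-1,0,1}" using insert.prems by auto
  have IH: "(\<Sum>j\<in>A. f j) = int (card {j\<in>A. f j = 1}) - int (card {j\<in>A. f j = -1})"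
    using insert.IH insert.prems by auto
  have e1: "{j\<in>insert x A. f j = 1} = (if f x = 1 then insert x {j\<in>A. f j = 1} else {j\<in>A. f j = 1})" by auto
  have e2: "{j\<in>insert x A. f j = -1} = (if f x = -1 then insert x {j\<in>A. f j = -1} else {j\<in>A. f j = -1})" by auto
  have f1: "finite {j\<in>A. f j = 1}" "finite {j\<in>A. f j = -1}" using insert.hyps by auto
  have n1: "x \<notin> {j\<in>A. f j = 1}" "x \<notin> {j\<in>A. f j = -1}" using insert.hyps by auto
  show ?case using fx insert.hyps IH f1 n1 unfolding e1 e2 by auto
qed

theorem sep_H1:
  assumes vals: "\<And>x. eta \<omega> x \<in> {-1,0,1}" and sep: "separator \<omega> v"
  shows "v \<in> H1 \<omega>"
proof -
  define hole where "hole = (\<lambda>y. eta \<omega> y = -1)"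
  define isb where "isb = (\<lambda>y. eta \<omega> y = 1)"
  have hv: "hole v" using sep unfolding separator_def hole_def by simp
  have disj: "\<And>y. \<not> (hole y \<and> isb y)" unfolding hole_def isb_def by simp
  have lc: "card {j\<in>{a..v-1}. isb j} \<le> card {j\<in>{a..v-1}. hole j}" if "a < v" for a
  proof -
    have "(\<Sum>j\<in>{a..v-1}. eta \<omega> j) \<le> 0" using sep that unfolding separator_def by blast
    then show ?thesis using sum_card[of "{a..v-1}" "eta \<omega>"] vals unfolding isb_def hole_def by simp
  qed
  have rc: "card {j\<in>{v+1..b}. isb j} \<le> card {j\<in>{v+1..b}. hole j}" if "v < b" for b
  proof -
    have "(\<Sum>j\<in>{v+1..b}. eta \<omega> j) \<le> 0" using sep that unfolding separator_def by blast
    then show ?thesis using sum_card[of "{v+1..b}" "eta \<omega>"] vals unfolding isb_def hole_def by simp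
  qed
  have w0: "\<And>x. walk_pos \<omega> x 0 = x" by (simp add: walk_pos_def)
  have ws: "\<And>x k. \<bar>walk_pos \<omega> x (Suc k) - walk_pos \<omega> x k\<bar> \<le> 1" by (simp add: walk_pos_def)
  have nf: "v \<notin> filled_window \<omega> n" for n
  proof -
    define L where "L = sort_key (clk \<omega>) (filter (\<lambda>x. eta \<omega> x = 1) [- int n..int n])"
    have "Inv hole isb v (fold (mv hole (walk_pos \<omega>)) L {}) ({} \<union> set L)"
      by (rule fold_inv[OF w0 ws disj hv lc rc]) (auto simp: L_def isb_def Inv_empty)
    moreover have "filled_window \<omega> n = fold (mv hole (walk_pos \<omega>)) L {}"
      unfolding filled_window_def L_def move_ball_eq hole_def ..
    ultimately show ?thesis unfolding Inv_def by simp
  qed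
  show ?thesis unfolding H1_def using hv nf by (simp add: hole_def always_eventually)
qed



definition pm :: "real \<Rightarrow> real \<Rightarrow> int \<Rightarrow> real" where
  "pm rb rh s = (if s = 1 then rb else if s = -1 then rh else if s = 0 then 1 - rb - rh else 0)"

definition dep :: "int set \<Rightarrow> golf_omega set \<Rightarrow> bool" where
  "dep I A \<longleftrightarrow> (\<forall>\<omega> \<omega>'. (\<forall>i\<in>I. \<omega> i = \<omega>' i) \<longrightarrow> (\<omega> \<in> A \<longleftrightarrow> \<omega>' \<in> A))"

lemma ps_clock: "prob_space clock_law"
  unfolding clock_law_def by (rule prob_space_uniform_measure) auto

lemma ps_walk: "prob_space (walk_law p)"
  unfolding walk_law_def by (rule prob_space_PiM) (simp add: prob_space_measure_pmf)

lemma space_CW: "space (clock_law \<Otimes>\<^sub>M walk_law p) = UNIV"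
  by (simp add: space_pair_measure clock_law_def walk_law_def space_PiM)

locale golf =
  fixes rb rh p :: real
  assumes b0: "0 \<le> rb" and bh: "rb < rh" and s1: "rb + rh \<le> 1"
begin

lemma pm_nonneg: "0 \<le> pm rb rh s" using b0 bh s1 by (simp add: pm_def)

lemma pm_int: "(\<integral>\<^sup>+x. ennreal (pm rb rh x) \<partial>count_space UNIV) = 1"
proof -
  have "(\<integral>\<^sup>+x. ennreal (pm rb rh x) \<partial>count_space UNIV) = (\<Sum>x\<in>{-1,0,1}. ennreal (pm rb rh x))"
    by (rule nn_integral_count_space') (auto simp: pm_def)
  also have "\<dots> = ennreal (\<Sum>x\<in>{-1,0,1}. pm rb rh x)"
    by (rule sum_ennreal) (rule pm_nonneg)
  also have "(\<Sum>x\<in>{-1,0,1}. pm rb rh x) = 1" by (simp add: pm_def)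
  finally show ?thesis by simp
qed

lemma state_law_eq: "state_law rb rh = measure_pmf (embed_pmf (pm rb rh))"
  unfolding state_law_def pm_def[abs_def] ..

lemma pmf_q: "pmf (embed_pmf (pm rb rh)) s = pm rb rh s"
  by (rule pmf_embed_pmf[OF pm_nonneg pm_int])

lemma ps_SL: "prob_space (site_law rb rh p)"
  unfolding site_law_def state_law_eq
  by (intro prob_space_pair prob_space_measure_pmf ps_clock ps_walk)

lemma space_SL: "space (site_law rb rh p) = UNIV"
proof -
  have "space (site_law rb rh p) = space (state_law rb rh) \<times> space (clock_law \<Otimes>\<^sub>M walk_law p)"
    unfolding site_law_def by (rule space_pair_measure)
  then show ?thesis by (simp add: space_CW state_law_def)
qed

sublocale P: product_prob_space "\<lambda>_::int. site_law rb rh p" UNIV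
  by (simp add: product_prob_space_def product_prob_space_axioms_def product_sigma_finite_def
      ps_SL prob_space_imp_sigma_finite)

abbreviation "SL \<equiv> site_law rb rh p"
abbreviation "M \<equiv> PiM (UNIV::int set) (\<lambda>_. site_law rb rh p)"

lemma space_M: "space M = UNIV"
  by (simp add: space_PiM space_SL)

lemma sets_UNIV_SL: "{a} \<times> UNIV \<in> sets SL"
proof -
  have "{a} \<times> space (clock_law \<Otimes>\<^sub>M walk_law p) \<in> sets SL"
    unfolding site_law_def by (intro pair_measureI) (auto simp: state_law_def)
  then show ?thesis by (simp add: space_CW)
qed

lemma eta_set: "{\<omega>. eta \<omega> x = a} = (\<lambda>\<omega>. \<omega> x) -` ({a} \<times> UNIV) \<inter> space M"
  by (auto simp: eta_def space_M mem_Times_iff)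

lemma meas_eta: "{\<omega>. eta \<omega> x = a} \<in> sets M"
  unfolding eta_set by (rule measurable_sets[OF measurable_component_singleton[of x UNIV "\<lambda>_. SL"] sets_UNIV_SL]) auto

lemma emeasure_SL: "emeasure SL ({a} \<times> UNIV) = ennreal (pm rb rh a)"
proof -
  interpret CW: prob_space "clock_law \<Otimes>\<^sub>M walk_law p" by (intro prob_space_pair ps_clock ps_walk)
  have "emeasure SL ({a} \<times> space (clock_law \<Otimes>\<^sub>M walk_law p)) =
      emeasure (state_law rb rh) {a} * emeasure (clock_law \<Otimes>\<^sub>M walk_law p) (space (clock_law \<Otimes>\<^sub>M walk_law p))"
    unfolding site_law_def by (rule CW.emeasure_pair_measure_Times) (auto simp: state_law_def)
  moreover have "emeasure (clock_law \<Otimes>\<^sub>M walk_law p) UNIV = 1"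
    using CW.emeasure_space_1 space_CW by simp
  ultimately show ?thesis by (simp add: space_CW state_law_eq emeasure_pmf_single pmf_q)
qed

lemma emeasure_eta: "emeasure M {\<omega>. eta \<omega> x = a} = ennreal (pm rb rh a)"
proof -
  have "{\<omega>. eta \<omega> x = a} = {\<omega>\<in>space M. \<omega> x \<in> {a} \<times> UNIV}" by (auto simp: eta_def space_M mem_Times_iff)
  then show ?thesis using P.emeasure_PiM_Collect_single[of x "{a} \<times> UNIV"] sets_UNIV_SL emeasure_SL by simp
qed

lemma prob_eta: "P.prob {\<omega>. eta \<omega> x = a} = pm rb rh a"
  using emeasure_eta[of x a] pm_nonneg by (simp add: P.emeasure_eq_measure)

end


definition Sd :: "int \<Rightarrow> int \<Rightarrow> nat \<Rightarrow> golf_omega \<Rightarrow> int" where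
  "Sd d e i \<omega> = (\<Sum>t\<in>{1..i}. eta \<omega> (e + d * int t))"

definition Ev :: "int \<Rightarrow> int \<Rightarrow> nat \<Rightarrow> int \<Rightarrow> golf_omega set" where
  "Ev d e n j = {\<omega>. \<exists>i\<in>{1..n}. j \<le> Sd d e i \<omega>}"

definition Bd :: "int \<Rightarrow> int \<Rightarrow> int \<Rightarrow> golf_omega set" where
  "Bd d e j = {\<omega>. \<exists>i\<ge>1. j \<le> Sd d e i \<omega>}"

lemma Sd_Suc: "Sd d e (Suc i) \<omega> = eta \<omega> (e + d) + Sd d (e + d) i \<omega>"
proof -
  have "Sd d e (Suc i) \<omega> = eta \<omega> (e + d * int 1) + (\<Sum>t\<in>{Suc 1..Suc i}. eta \<omega> (e + d * int t))"
    unfolding Sd_def by (rule sum.atLeast_Suc_atMost) simp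
  also have "(\<Sum>t\<in>{Suc 1..Suc i}. eta \<omega> (e + d * int t)) = (\<Sum>t\<in>{1..i}. eta \<omega> (e + d * int (Suc t)))"
    by (rule sum.shift_bounds_cl_Suc_ivl)
  also have "\<dots> = Sd d (e + d) i \<omega>" unfolding Sd_def by (simp add: algebra_simps)
  finally show ?thesis by simp
qed

lemma Sd_0: "Sd d e 0 \<omega> = 0" by (simp add: Sd_def)

lemma Ev_Suc: "\<omega> \<in> Ev d e (Suc n) j \<longleftrightarrow> (j \<le> eta \<omega> (e + d) \<or> \<omega> \<in> Ev d (e + d) n (j - eta \<omega> (e + d)))"
proof
  assume "\<omega> \<in> Ev d e (Suc n) j"
  then obtain i where i: "i \<in> {1..Suc n}" "j \<le> Sd d e i \<omega>" by (auto simp: Ev_def)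
  then obtain i' where i': "i = Suc i'" by (cases i) auto
  show "j \<le> eta \<omega> (e + d) \<or> \<omega> \<in> Ev d (e + d) n (j - eta \<omega> (e + d))"
  proof (cases "i' = 0")
    case True then show ?thesis using i i' by (simp add: Sd_Suc Sd_0)
  next
    case False
    then have "i' \<in> {1..n}" using i i' by auto
    moreover have "j - eta \<omega> (e + d) \<le> Sd d (e + d) i' \<omega>" using i i' by (simp add: Sd_Suc)
    ultimately show ?thesis unfolding Ev_def by blast
  qed
next
  assume a: "j \<le> eta \<omega> (e + d) \<or> \<omega> \<in> Ev d (e + d) n (j - eta \<omega> (e + d))"
  show "\<omega> \<in> Ev d e (Suc n) j"
  proof (cases "j \<le> eta \<omega> (e + d)")
    case True
    have "j \<le> Sd d e (Suc 0) \<omega>" using True by (simp add: Sd_Suc Sd_0)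
    then show ?thesis unfolding Ev_def by (intro CollectI bexI[of _ "Suc 0"]) auto
  next
    case False
    then obtain i where i: "i \<in> {1..n}" "j - eta \<omega> (e + d) \<le> Sd d (e + d) i \<omega>" using a by (auto simp: Ev_def)
    have "j \<le> Sd d e (Suc i) \<omega>" using i by (simp add: Sd_Suc)
    then show ?thesis unfolding Ev_def using i by (intro CollectI bexI[of _ "Suc i"]) auto
  qed
qed

lemma dep_eta:
  assumes "\<And>\<omega> \<omega>'. (\<forall>j\<in>K. eta \<omega> j = eta \<omega>' j) \<Longrightarrow> P \<omega> = P \<omega>'"
  shows "dep K {\<omega>. P \<omega>}"
proof (unfold dep_def, intro allI impI)
  fix \<omega> \<omega>' :: golf_omega assume "\<forall>i\<in>K. \<omega> i = \<omega>' i"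
  then have "\<forall>j\<in>K. eta \<omega> j = eta \<omega>' j" by (simp add: eta_def)
  then show "(\<omega> \<in> {\<omega>. P \<omega>}) = (\<omega>' \<in> {\<omega>. P \<omega>})" using assms by simp
qed

lemma dep_mono: "dep I A \<Longrightarrow> I \<subseteq> I' \<Longrightarrow> dep I' A"
  unfolding dep_def by blast

lemma dep_UNIV: "dep I UNIV" unfolding dep_def by blast

lemma Sd_cong: "(\<forall>t\<in>{1..i}. eta \<omega> (e + d * int t) = eta \<omega>' (e + d * int t)) \<Longrightarrow> Sd d e i \<omega> = Sd d e i \<omega>'"
  unfolding Sd_def by (rule sum.cong) auto

lemma Ev_eq: "Ev d e n j = {\<omega>. \<exists>i\<in>{1..n}. j \<le> Sd d e i \<omega>}" by (simp add: Ev_def)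

lemma dep_Ev: "dep ((\<lambda>t. e + d * int t) ` {1..n}) (Ev d e n j)"
  unfolding Ev_eq
proof (rule dep_eta)
  fix \<omega> \<omega>' assume a: "\<forall>j\<in>(\<lambda>t. e + d * int t) ` {1..n}. eta \<omega> j = eta \<omega>' j"
  have "Sd d e i \<omega> = Sd d e i \<omega>'" if "i \<in> {1..n}" for i
    using a that by (intro Sd_cong) auto
  then show "(\<exists>i\<in>{1..n}. j \<le> Sd d e i \<omega>) = (\<exists>i\<in>{1..n}. j \<le> Sd d e i \<omega>')" by auto
qed

lemma dep_Bd: "dep ((\<lambda>t. e + d * int t) ` {1..}) (Bd d e j)"
  unfolding Bd_def
proof (rule dep_eta)
  fix \<omega> \<omega>' assume a: "\<forall>j\<in>(\<lambda>t. e + d * int t) ` {1..}. eta \<omega> j = eta \<omega>' j"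
  have "Sd d e i \<omega> = Sd d e i \<omega>'" for i
    using a by (intro Sd_cong) auto
  then show "(\<exists>i\<ge>1. j \<le> Sd d e i \<omega>) = (\<exists>i\<ge>1. j \<le> Sd d e i \<omega>')" by auto
qed

lemma Bd_UN: "Bd d e j = (\<Union>n. Ev d e n j)"
proof safe
  fix x assume "x \<in> Bd d e j"
  then obtain i where "1 \<le> i" "j \<le> Sd d e i x" unfolding Bd_def by auto
  then have "x \<in> Ev d e i j" unfolding Ev_def by auto
  then show "x \<in> (\<Union>n. Ev d e n j)" by blast
qed (auto simp: Bd_def Ev_def)

context golf
begin

lemma cyl:
  assumes K: "finite K" and Pd: "\<And>\<omega> \<omega>'. (\<forall>j\<in>K. eta \<omega> j = eta \<omega>' j) \<Longrightarrow> P \<omega> = P \<omega>'"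
  shows "{\<omega>. P \<omega>} \<in> sets M"
proof -
  define g where "g \<omega> = (\<lambda>j\<in>K. eta \<omega> j)" for \<omega>
  have cnt: "countable (PiE K (\<lambda>_. UNIV :: int set))" by (rule countable_PiE) (auto simp: K)
  have gm: "g \<in> measurable M (count_space (PiE K (\<lambda>_. UNIV)))"
  proof (subst measurable_count_space_eq_countable[OF cnt], intro conjI ballI)
    show "g \<in> space M \<rightarrow> PiE K (\<lambda>_. UNIV)" by (auto simp: g_def)
    fix f assume f: "f \<in> PiE K (\<lambda>_. UNIV::int set)"
    have "g -` {f} \<inter> space M = {\<omega>\<in>space M. \<forall>j\<in>K. eta \<omega> j = f j}"
    proof safe
      fix \<omega> assume "\<omega> \<in> space M" "\<forall>j\<in>K. eta \<omega> j = f j"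
      then show "\<omega> \<in> g -` {f}" using f unfolding g_def
        by (auto simp: fun_eq_iff PiE_iff extensional_def)
    qed (auto simp: g_def)
    also have "\<dots> \<in> sets M"
      by (rule sets.sets_Collect_finite_All) (auto simp: K space_M meas_eta)
    finally show "g -` {f} \<inter> space M \<in> sets M" .
  qed
  define S0 where "S0 = {\<omega>. P \<omega>}"
  have eq: "S0 = g -` (g ` S0) \<inter> space M"
    unfolding S0_def
  proof safe
    fix \<omega> \<omega>' assume "g \<omega> = g \<omega>'" "P \<omega>'"
    moreover have "\<forall>j\<in>K. eta \<omega> j = eta \<omega>' j"
      using \<open>g \<omega> = g \<omega>'\<close> unfolding g_def by (metis restrict_apply')
    ultimately show "P \<omega>" using Pd by blast
  qed (auto simp: space_M)
  have "g -` (g ` S0) \<inter> space M \<in> sets M"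
    by (rule measurable_sets[OF gm]) (auto simp: g_def)
  then have "S0 \<in> sets M" by (subst eq)
  then show ?thesis unfolding S0_def .
qed

lemma indep_coords: "P.indep_vars (\<lambda>_. SL) (\<lambda>i \<omega>. \<omega> i) UNIV"
proof -
  have "P.indep_vars (\<lambda>_. SL) (\<lambda>i \<omega>. \<omega> i) UNIV \<longleftrightarrow>
      distr M (PiM UNIV (\<lambda>_. SL)) (\<lambda>x. \<lambda>i\<in>UNIV. x i) = PiM UNIV (\<lambda>i. distr M SL (\<lambda>\<omega>. \<omega> i))"
    by (rule P.indep_vars_iff_distr_eq_PiM) auto
  moreover have "(\<lambda>x::golf_omega. \<lambda>i\<in>UNIV. x i) = (\<lambda>x. x)" by (auto simp: restrict_def)
  moreover have "distr M (PiM UNIV (\<lambda>_. SL)) (\<lambda>x. x) = M" by simp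
  moreover have "PiM UNIV (\<lambda>i. distr M SL (\<lambda>\<omega>. \<omega> i)) = M"
    by (simp add: P.PiM_component)
  ultimately show ?thesis by simp
qed

lemma indep2:
  assumes IJ: "I \<inter> J = {}" and A: "A \<in> sets M" and B: "B \<in> sets M" and dA: "dep I A" and dB: "dep J B"
  shows "P.prob (A \<inter> B) = P.prob A * P.prob B"
proof -
  have iv: "P.indep_var (PiM I (\<lambda>_. SL)) (\<lambda>\<omega>. restrict (\<lambda>i. \<omega> i) I) (PiM J (\<lambda>_. SL)) (\<lambda>\<omega>. restrict (\<lambda>i. \<omega> i) J)"
    by (rule P.indep_var_restrict[OF indep_coords IJ]) auto
  define ext where "ext K (f :: golf_omega) = merge K (-K) (f, restrict (\<lambda>_. undefined) (-K) :: golf_omega)" for K f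
  have extm: "ext K \<in> measurable (PiM K (\<lambda>_. SL)) M" for K
  proof -
    have "(\<lambda>f. (f, restrict (\<lambda>_. undefined) (-K))) \<in> measurable (PiM K (\<lambda>_. SL)) (PiM K (\<lambda>_. SL) \<Otimes>\<^sub>M PiM (-K) (\<lambda>_. SL))"
      by (intro measurable_Pair measurable_ident_sets measurable_const) (auto simp: space_PiM space_SL)
    from measurable_comp[OF this measurable_merge] have
      "(\<lambda>f. merge K (-K) (f, restrict (\<lambda>_. undefined) (-K))) \<in> measurable (PiM K (\<lambda>_. SL)) (PiM (K \<union> -K) (\<lambda>_. SL))"
      by (simp add: o_def)
    then show ?thesis unfolding ext_def by simp
  qed
  have pre: "(\<lambda>\<omega>. restrict (\<lambda>i. \<omega> i) K) -` (ext K -` C \<inter> space (PiM K (\<lambda>_. SL))) \<inter> space M = C"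
    if dC: "dep K C" for K C
  proof -
    have "ext K (restrict \<omega> K) \<in> C \<longleftrightarrow> \<omega> \<in> C" for \<omega>
      using dC unfolding dep_def ext_def by (metis (no_types, lifting) Compl_disjoint merge_apply(1) restrict_apply')
    then show ?thesis by (auto simp: space_M space_PiM space_SL)
  qed
  have ie: "P.indep_set (sigma_sets (space M) {(\<lambda>\<omega>. restrict (\<lambda>i. \<omega> i) I) -` X \<inter> space M | X. X \<in> sets (PiM I (\<lambda>_. SL))})
      (sigma_sets (space M) {(\<lambda>\<omega>. restrict (\<lambda>i. \<omega> i) J) -` X \<inter> space M | X. X \<in> sets (PiM J (\<lambda>_. SL))})"
    using iv unfolding P.indep_var_eq by blast
  have Ain: "A \<in> sigma_sets (space M) {(\<lambda>\<omega>. restrict (\<lambda>i. \<omega> i) I) -` X \<inter> space M | X. X \<in> sets (PiM I (\<lambda>_. SL))}"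
  proof (rule sigma_sets.Basic)
    have "ext I -` A \<inter> space (PiM I (\<lambda>_. SL)) \<in> sets (PiM I (\<lambda>_. SL))" by (rule measurable_sets[OF extm A])
    then show "A \<in> {(\<lambda>\<omega>. restrict (\<lambda>i. \<omega> i) I) -` X \<inter> space M | X. X \<in> sets (PiM I (\<lambda>_. SL))}"
      using pre[OF dA] by blast
  qed
  have Bin: "B \<in> sigma_sets (space M) {(\<lambda>\<omega>. restrict (\<lambda>i. \<omega> i) J) -` X \<inter> space M | X. X \<in> sets (PiM J (\<lambda>_. SL))}"
  proof (rule sigma_sets.Basic)
    have "ext J -` B \<inter> space (PiM J (\<lambda>_. SL)) \<in> sets (PiM J (\<lambda>_. SL))" by (rule measurable_sets[OF extm B])
    then show "B \<in> {(\<lambda>\<omega>. restrict (\<lambda>i. \<omega> i) J) -` X \<inter> space M | X. X \<in> sets (PiM J (\<lambda>_. SL))}"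
      using pre[OF dB] by blast
  qed
  show ?thesis using ie Ain Bin unfolding P.indep_sets2_eq by blast
qed

end


lemma sumR: "e \<le> k \<Longrightarrow> (\<Sum>j\<in>{e+1..k}. eta \<omega> j) = Sd 1 e (nat (k - e)) \<omega>"
  unfolding Sd_def
  by (rule sum.reindex_bij_witness[where i="\<lambda>t. e + int t" and j="\<lambda>j. nat (j - e)"]) auto

lemma sumL: "k \<le> e \<Longrightarrow> (\<Sum>j\<in>{k..e-1}. eta \<omega> j) = Sd (-1) e (nat (e - k)) \<omega>"
  unfolding Sd_def
  by (rule sum.reindex_bij_witness[where i="\<lambda>t. e - int t" and j="\<lambda>j. nat (e - j)"]) auto

lemma sep_block:
  fixes r :: nat
  assumes G: "\<forall>t\<in>{v - int r..v + int r}. eta \<omega> t = -1"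
    and nL: "\<omega> \<notin> Bd (-1) (v - int r) (int r + 1)" and nR: "\<omega> \<notin> Bd 1 (v + int r) (int r + 1)"
  shows "separator \<omega> v"
  unfolding separator_def
proof (intro conjI allI impI)
  show "eta \<omega> v = -1" using G by auto
next
  fix k assume kv: "k < v"
  show "(\<Sum>j\<in>{k..v-1}. eta \<omega> j) \<le> 0"
  proof (cases "v - int r \<le> k")
    case True
    then have "(\<Sum>j\<in>{k..v-1}. eta \<omega> j) = (\<Sum>j\<in>{k..v-1}. -1)" using G by (intro sum.cong) auto
    then show ?thesis by simp
  next
    case False
    have split: "{k..v-1} = {k..v - int r - 1} \<union> {v - int r..v-1}" using False by auto
    have s1: "(\<Sum>j\<in>{k..v-1}. eta \<omega> j) = (\<Sum>j\<in>{k..v - int r - 1}. eta \<omega> j) + (\<Sum>j\<in>{v - int r..v-1}. eta \<omega> j)"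
      unfolding split by (rule sum.union_disjoint) auto
    have s2: "(\<Sum>j\<in>{v - int r..v-1}. eta \<omega> j) = (\<Sum>j\<in>{v - int r..v-1}. -1)" using G by (intro sum.cong) auto
    have s3: "(\<Sum>j\<in>{v - int r..v-1}. (-1::int)) = - int r" by simp
    have s4: "(\<Sum>j\<in>{k..v - int r - 1}. eta \<omega> j) = Sd (-1) (v - int r) (nat (v - int r - k)) \<omega>"
      using sumL[of k "v - int r" \<omega>] False by simp
    have s5: "Sd (-1) (v - int r) (nat (v - int r - k)) \<omega> \<le> int r"
    proof (rule ccontr)
      assume "\<not> Sd (-1) (v - int r) (nat (v - int r - k)) \<omega> \<le> int r"
      then have "\<omega> \<in> Bd (-1) (v - int r) (int r + 1)" unfolding Bd_def using False
        by (intro CollectI exI[of _ "nat (v - int r - k)"]) auto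
      then show False using nL by simp
    qed
    show ?thesis using s1 s2 s3 s4 s5 by linarith
  qed
next
  fix k assume kv: "v < k"
  show "(\<Sum>j\<in>{v+1..k}. eta \<omega> j) \<le> 0"
  proof (cases "k \<le> v + int r")
    case True
    then have "(\<Sum>j\<in>{v+1..k}. eta \<omega> j) = (\<Sum>j\<in>{v+1..k}. -1)" using G by (intro sum.cong) auto
    then show ?thesis by simp
  next
    case False
    have split: "{v+1..k} = {v+1..v + int r} \<union> {v + int r + 1..k}" using False by auto
    have s1: "(\<Sum>j\<in>{v+1..k}. eta \<omega> j) = (\<Sum>j\<in>{v+1..v + int r}. eta \<omega> j) + (\<Sum>j\<in>{v + int r + 1..k}. eta \<omega> j)"
      unfolding split by (rule sum.union_disjoint) auto
    have s2: "(\<Sum>j\<in>{v+1..v + int r}. eta \<omega> j) = (\<Sum>j\<in>{v+1..v + int r}. -1)" using G by (intro sum.cong) auto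
    have s3: "(\<Sum>j\<in>{v+1..v + int r}. (-1::int)) = - int r" by simp
    have s4: "(\<Sum>j\<in>{v + int r + 1..k}. eta \<omega> j) = Sd 1 (v + int r) (nat (k - (v + int r))) \<omega>"
      using sumR[of "v + int r" k \<omega>] False by simp
    have s5: "Sd 1 (v + int r) (nat (k - (v + int r))) \<omega> \<le> int r"
    proof (rule ccontr)
      assume "\<not> Sd 1 (v + int r) (nat (k - (v + int r))) \<omega> \<le> int r"
      then have "\<omega> \<in> Bd 1 (v + int r) (int r + 1)" unfolding Bd_def using False
        by (intro CollectI exI[of _ "nat (k - (v + int r))"]) auto
      then show False using nR by simp
    qed
    show ?thesis using s1 s2 s3 s4 s5 by linarith
  qed
qed

context golf
begin

lemma meas_Ev: "Ev d e n j \<in> sets M"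
  unfolding Ev_eq
proof (rule cyl[of "(\<lambda>t. e + d * int t) ` {1..n}"])
  fix \<omega> \<omega>' assume a: "\<forall>j\<in>(\<lambda>t. e + d * int t) ` {1..n}. eta \<omega> j = eta \<omega>' j"
  have "Sd d e i \<omega> = Sd d e i \<omega>'" if "i \<in> {1..n}" for i
    using a that by (intro Sd_cong) auto
  then show "(\<exists>i\<in>{1..n}. j \<le> Sd d e i \<omega>) = (\<exists>i\<in>{1..n}. j \<le> Sd d e i \<omega>')" by auto
qed auto

lemma meas_Bd: "Bd d e j \<in> sets M"
  unfolding Bd_UN by (rule sets.countable_UN) (auto simp: meas_Ev)

lemma rh_pos: "0 < rh" using b0 bh by simp

lemma c_nonneg: "0 \<le> rb / rh" using b0 rh_pos by simp

lemma c_less1: "rb / rh < 1" using bh rh_pos by simp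

lemma Ev_bound:
  assumes d: "d \<noteq> 0"
  shows "P.prob (Ev d e n (int j)) \<le> (rb/rh) ^ j"
proof (induction n arbitrary: e j)
  case 0
  have "Ev d e 0 (int j) = {}" by (simp add: Ev_def)
  then show ?case using c_nonneg by simp
next
  case (Suc n)
  define c where "c = rb / rh"
  have c0: "0 \<le> c" unfolding c_def by (rule c_nonneg)
  show ?case
  proof (cases j)
    case 0 then show ?thesis by simp
  next
    case (Suc j')
    define X where "X \<omega> = eta \<omega> (e + d)" for \<omega>
    define T1 where "T1 = (if j' = 0 then UNIV else Ev d (e+d) n (int j'))"
    define T0 where "T0 = Ev d (e+d) n (int j)"
    define Tm where "Tm = Ev d (e+d) n (int (Suc j))"
    define A1 where "A1 = {\<omega>. eta \<omega> (e + d) = 1}"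
    define A0 where "A0 = {\<omega>. eta \<omega> (e + d) = 0}"
    define Am where "Am = {\<omega>. eta \<omega> (e + d) = -1}"
    define R where "R = UNIV - (A1 \<union> A0 \<union> Am)"
    have sub: "Ev d e (Suc n) (int j) \<subseteq> (A1 \<inter> T1) \<union> (A0 \<inter> T0) \<union> (Am \<inter> Tm) \<union> R"
    proof
      fix \<omega> assume "\<omega> \<in> Ev d e (Suc n) (int j)"
      hence h: "int j \<le> X \<omega> \<or> \<omega> \<in> Ev d (e+d) n (int j - X \<omega>)" unfolding Ev_Suc X_def .
      consider "X \<omega> = 1" | "X \<omega> = 0" | "X \<omega> = -1" | "X \<omega> \<notin> {-1,0,1}" by auto
      then show "\<omega> \<in> (A1 \<inter> T1) \<union> (A0 \<inter> T0) \<union> (Am \<inter> Tm) \<union> R"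
      proof cases
        case 1 then show ?thesis using h Suc by (auto simp: A1_def T1_def X_def)
      next
        case 2 then show ?thesis using h Suc by (auto simp: A0_def T0_def X_def)
      next
        case 3
        then have "int j - X \<omega> = int (Suc j)" by simp
        then show ?thesis using h 3 Suc by (auto simp: Am_def Tm_def X_def)
      next
        case 4 then show ?thesis by (auto simp: R_def A1_def A0_def Am_def X_def)
      qed
    qed
    have mA: "A1 \<in> sets M" "A0 \<in> sets M" "Am \<in> sets M" unfolding A1_def A0_def Am_def by (auto intro: meas_eta)
    have mT: "T1 \<in> sets M" "T0 \<in> sets M" "Tm \<in> sets M" unfolding T1_def T0_def Tm_def
      by (auto intro: meas_Ev simp: space_M[symmetric])
    have mR: "R \<in> sets M" unfolding R_def using mA by (auto simp: space_M[symmetric])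
    define K where "K = (\<lambda>t. (e + d) + d * int t) ` {1..n}"
    have disj: "{e + d} \<inter> K = {}" using d unfolding K_def by auto
    have dA: "dep {e + d} A1" "dep {e + d} A0" "dep {e + d} Am" unfolding A1_def A0_def Am_def
      by (auto intro!: dep_eta)
    have dK: "dep K (Ev d (e+d) n x)" for x unfolding K_def by (rule dep_Ev)
    have dT: "dep K T1" "dep K T0" "dep K Tm" unfolding T1_def T0_def Tm_def
      using dK dep_UNIV by auto
    have pA: "P.prob A1 = rb" "P.prob A0 = 1 - rb - rh" "P.prob Am = rh"
      unfolding A1_def A0_def Am_def by (auto simp: prob_eta pm_def)
    have pR: "P.prob R = 0"
    proof -
      have dj: "A1 \<inter> A0 = {}" "(A1 \<union> A0) \<inter> Am = {}" by (auto simp: A1_def A0_def Am_def)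
      have "P.prob (A1 \<union> A0 \<union> Am) = P.prob (A1 \<union> A0) + P.prob Am"
        by (rule P.finite_measure_Union) (use mA dj in auto)
      also have "P.prob (A1 \<union> A0) = P.prob A1 + P.prob A0"
        by (rule P.finite_measure_Union) (use mA dj in auto)
      finally have "P.prob (A1 \<union> A0 \<union> Am) = P.prob A1 + P.prob A0 + P.prob Am" .
      also have "\<dots> = 1" using pA by simp
      finally have "P.prob (A1 \<union> A0 \<union> Am) = 1" .
      moreover have "P.prob R = 1 - P.prob (A1 \<union> A0 \<union> Am)"
        unfolding R_def using P.prob_compl[of "A1 \<union> A0 \<union> Am"] mA by (simp add: space_M)
      ultimately show ?thesis by simp
    qed
    have IH: "\<And>e j. P.prob (Ev d e n (int j)) \<le> c ^ j" using Suc.IH unfolding c_def .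
    have pT1: "P.prob T1 \<le> c ^ j'"
      using IH[of "e+d" j'] P.prob_space by (auto simp: T1_def space_M)
    have "P.prob (Ev d e (Suc n) (int j)) \<le> P.prob ((A1 \<inter> T1) \<union> (A0 \<inter> T0) \<union> (Am \<inter> Tm) \<union> R)"
      by (rule P.finite_measure_mono[OF sub]) (use mA mT mR in auto)
    also have "\<dots> \<le> P.prob (A1 \<inter> T1) + P.prob (A0 \<inter> T0) + P.prob (Am \<inter> Tm) + P.prob R"
      using mA mT mR
      by (smt (verit) measure_Un_le sets.Int sets.Un)
    also have "\<dots> = rb * P.prob T1 + (1 - rb - rh) * P.prob T0 + rh * P.prob Tm"
      using indep2[OF disj mA(1) mT(1) dA(1) dT(1)] indep2[OF disj mA(2) mT(2) dA(2) dT(2)]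
        indep2[OF disj mA(3) mT(3) dA(3) dT(3)] pA pR by simp
    also have "\<dots> \<le> rb * c ^ j' + (1 - rb - rh) * c ^ j + rh * c ^ (Suc j)"
    proof -
      have "rb * P.prob T1 \<le> rb * c ^ j'" by (rule mult_left_mono[OF pT1 b0])
      moreover have "(1 - rb - rh) * P.prob T0 \<le> (1 - rb - rh) * c ^ j"
        using IH[of "e+d" j] s1 unfolding T0_def by (intro mult_left_mono) auto
      moreover have "rh * P.prob Tm \<le> rh * c ^ (Suc j)"
        using IH[of "e+d" "Suc j"] rh_pos unfolding Tm_def by (intro mult_left_mono) auto
      ultimately show ?thesis by linarith
    qed
    also have "\<dots> = c ^ j"
    proof -
      have rc: "rh * c = rb" unfolding c_def using rh_pos by simp
      have e1: "rb * c ^ j' = rh * c ^ (Suc j')" by (simp add: rc[symmetric] mult.assoc)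
      have e2: "rh * c ^ (Suc (Suc j')) = rb * c ^ (Suc j')"
        by (simp add: rc[symmetric] mult.assoc mult.left_commute)
      show ?thesis unfolding Suc e1 e2 by (simp add: algebra_simps)
    qed
    finally show ?thesis unfolding c_def .
  qed
qed

lemma Bd_bound:
  assumes d: "d \<noteq> 0"
  shows "P.prob (Bd d e (int j)) \<le> (rb/rh) ^ j"
proof -
  have r: "range (\<lambda>n. Ev d e n (int j)) \<subseteq> sets M" using meas_Ev by auto
  have i: "incseq (\<lambda>n. Ev d e n (int j))" by (auto simp: incseq_def Ev_def)
  have "(\<lambda>n. P.prob (Ev d e n (int j))) \<longlonglongrightarrow> P.prob (\<Union>n. Ev d e n (int j))"
    by (rule P.finite_Lim_measure_incseq[OF r i])
  then show ?thesis unfolding Bd_UN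
    by (rule LIMSEQ_le_const2) (use Ev_bound[OF d] in auto)
qed

end


lemma limit_zero:
  fixes z c h :: real
  assumes c0: "0 \<le> c" and c1: "c < 1" and h0: "0 < h" and h1: "h \<le> 1"
    and bnd: "\<And>r m. z \<le> (1 - h^(2*r+1))^m + 2 * real m * h^(2*r+1) * c^(r+1)"
  shows "z \<le> 0"
proof (rule ccontr)
  assume "\<not> z \<le> 0" hence zp: "0 < z" by simp
  obtain K :: nat where K: "2 / z < real K" using reals_Archimedean2 by blast
  have "(\<lambda>n. c^n) \<longlonglongrightarrow> 0" by (rule LIMSEQ_realpow_zero[OF c0 c1])
  moreover have "0 < z / (4 * (real K + 1))" using zp by simp
  ultimately have "eventually (\<lambda>n. c^n < z / (4 * (real K + 1))) sequentially" by (rule order_tendstoD)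
  then obtain r where r: "c^r < z / (4 * (real K + 1))" by (auto simp: eventually_sequentially)
  define g where "g = h^(2*r+1)"
  have g0: "0 < g" unfolding g_def using h0 by simp
  have g1: "g \<le> 1" unfolding g_def by (rule power_le_one) (use h0 h1 in auto)
  define m where "m = nat \<lceil>real K / g\<rceil>"
  have m1: "real K / g \<le> real m" unfolding m_def by linarith
  have x0: "0 \<le> real K / g" using g0 by simp
  have "real m = of_int \<lceil>real K / g\<rceil>" unfolding m_def using x0 by simp
  then have m2: "real m < real K / g + 1" using ceiling_correct[of "real K / g"] by linarith
  have mg1: "real K \<le> real m * g" using m1 g0 by (simp add: field_simps)
  have "real m * g < (real K / g + 1) * g" using m2 g0 by (simp add: mult_strict_right_mono)
  also have "\<dots> = real K + g" using g0 by (simp add: field_simps)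
  finally have mg2: "real m * g \<le> real K + 1" using g1 by linarith
  have t1: "(1 - g)^m \<le> exp (- g)^m"
    by (rule power_mono) (use g1 exp_ge_add_one_self[of "-g"] in auto)
  have t2: "exp (- g)^m = exp (- (real m * g))" using exp_of_nat_mult[of m "-g"] by simp
  have t3: "exp (- (real m * g)) \<le> exp (- real K)" using mg1 by simp
  have "1 + real K \<le> exp (real K)" by (rule exp_ge_add_one_self)
  then have "1 / exp (real K) \<le> 1 / (1 + real K)" by (intro divide_left_mono) auto
  then have t4: "exp (- real K) \<le> 1 / (1 + real K)" by (simp add: exp_minus inverse_eq_divide)
  have "2 < real K * z" using K zp by (simp add: field_simps)
  then have t5: "1 / (1 + real K) < z / 2" by (simp add: field_simps) (use zp in linarith)
  have t6: "c^(r+1) \<le> c^r" using c0 c1 by (simp add: mult_left_le_one_le)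
  have t7: "2 * real m * g * c^(r+1) \<le> 2 * (real K + 1) * c^r"
  proof -
    have "real m * g * c^(r+1) \<le> (real K + 1) * c^r"
      by (rule mult_mono[OF mg2 t6]) (use c0 in auto)
    then have "2 * (real m * g * c^(r+1)) \<le> 2 * ((real K + 1) * c^r)" by linarith
    then show ?thesis by (simp only: mult.assoc)
  qed
  have t8: "2 * (real K + 1) * c^r < z / 2"
  proof -
    have "2 * (real K + 1) * c^r < 2 * (real K + 1) * (z / (4 * (real K + 1)))"
      using r by (intro mult_strict_left_mono) auto
    also have "\<dots> = z / 2" by (simp add: field_simps)
    finally show ?thesis .
  qed
  have "z \<le> (1 - g)^m + 2 * real m * g * c^(r+1)" using bnd[of r m] unfolding g_def .
  then show False using t1 t2 t3 t4 t5 t7 t8 by linarith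
qed

definition uu :: "nat \<Rightarrow> nat \<Rightarrow> nat \<Rightarrow> int" where
  "uu N r i = int N + 1 + int r + int i * (2 * int r + 1)"
definition blk :: "int \<Rightarrow> nat \<Rightarrow> nat \<Rightarrow> nat \<Rightarrow> int set" where
  "blk s N r i = {s * uu N r i - int r..s * uu N r i + int r}"
definition Gs :: "int \<Rightarrow> nat \<Rightarrow> nat \<Rightarrow> nat \<Rightarrow> golf_omega set" where
  "Gs s N r i = {\<omega>. \<forall>t\<in>blk s N r i. eta \<omega> t = -1}"
definition BLs :: "int \<Rightarrow> nat \<Rightarrow> nat \<Rightarrow> nat \<Rightarrow> golf_omega set" where
  "BLs s N r i = Bd (-1) (s * uu N r i - int r) (int r + 1)"
definition BRs :: "int \<Rightarrow> nat \<Rightarrow> nat \<Rightarrow> nat \<Rightarrow> golf_omega set" where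
  "BRs s N r i = Bd 1 (s * uu N r i + int r) (int r + 1)"
definition NG :: "int \<Rightarrow> nat \<Rightarrow> nat \<Rightarrow> nat \<Rightarrow> golf_omega set" where
  "NG s N r m = {\<omega>. \<forall>i<m. \<not> (\<forall>t\<in>blk s N r i. eta \<omega> t = -1)}"
definition UU :: "int \<Rightarrow> nat \<Rightarrow> nat \<Rightarrow> nat \<Rightarrow> golf_omega set" where
  "UU s N r m = NG s N r m \<union> (\<Union>i<m. Gs s N r i \<inter> BLs s N r i) \<union> (\<Union>i<m. Gs s N r i \<inter> BRs s N r i)"
definition NoSep :: "int \<Rightarrow> nat \<Rightarrow> golf_omega set" where
  "NoSep s N = {\<omega>. \<not> (\<exists>v. int N < s * v \<and> separator \<omega> v)}"

lemma NoSep_sub: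
  assumes s: "s = 1 \<or> s = -1"
  shows "NoSep s N \<subseteq> UU s N r m"
proof
  fix \<omega> assume ns: "\<omega> \<in> NoSep s N"
  show "\<omega> \<in> UU s N r m"
  proof (rule ccontr)
    assume "\<omega> \<notin> UU s N r m"
    then obtain i where i: "i < m" "\<omega> \<in> Gs s N r i" "\<omega> \<notin> BLs s N r i" "\<omega> \<notin> BRs s N r i"
      unfolding UU_def NG_def Gs_def by auto
    define v where "v = s * uu N r i"
    have "separator \<omega> v"
      by (rule sep_block[of v r \<omega>]) (use i in \<open>auto simp: v_def Gs_def blk_def BLs_def BRs_def\<close>)
    moreover have "int N < s * v"
    proof -
      have nn: "0 \<le> int i * (2 * int r + 1)" by simp
      have "int N < uu N r i" unfolding uu_def using nn by linarith
      then show ?thesis using s unfolding v_def by auto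
    qed
    ultimately show False using ns unfolding NoSep_def by blast
  qed
qed

lemma blk_disj:
  assumes s: "s = 1 \<or> s = -1" and im: "i < m"
  shows "blk s N r i \<inter> blk s N r m = {}"
proof -
  have "(int i + 1) * (2 * int r + 1) \<le> int m * (2 * int r + 1)"
    using im by (intro mult_right_mono) auto
  then have d: "uu N r i + (2 * int r + 1) \<le> uu N r m" unfolding uu_def by (simp add: algebra_simps)
  show ?thesis using s d unfolding blk_def by auto
qed

lemma card_blk: "card (blk s N r i) = 2 * r + 1"
  unfolding blk_def by simp

context golf
begin

lemma prob_coords:
  assumes J: "finite J"
  shows "P.prob {\<omega>. \<forall>i\<in>J. eta \<omega> i = a} = pm rb rh a ^ card J"
proof -
  have "{\<omega>. \<forall>i\<in>J. eta \<omega> i = a} = {x\<in>space M. \<forall>i\<in>J. x i \<in> {a} \<times> UNIV}"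
    by (auto simp: eta_def space_M mem_Times_iff)
  then have "emeasure M {\<omega>. \<forall>i\<in>J. eta \<omega> i = a} = (\<Prod>i\<in>J. emeasure SL ({a} \<times> UNIV))"
    using P.emeasure_PiM_Collect[of J "\<lambda>_. {a} \<times> UNIV"] J sets_UNIV_SL by simp
  also have "\<dots> = ennreal (pm rb rh a ^ card J)"
    by (simp add: emeasure_SL ennreal_power pm_nonneg)
  finally show ?thesis using pm_nonneg
    by (simp add: P.emeasure_eq_measure)
qed

lemma meas_G: "Gs s N r i \<in> sets M"
  unfolding Gs_def by (rule cyl[of "blk s N r i"]) (auto simp: blk_def)

lemma prob_G: "P.prob (Gs s N r i) = rh ^ (2 * r + 1)"
  unfolding Gs_def using prob_coords[of "blk s N r i" "-1"] card_blk by (simp add: blk_def pm_def)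

lemma meas_NG: "NG s N r m \<in> sets M"
  unfolding NG_def by (rule cyl[of "\<Union>i<m. blk s N r i"]) (auto simp: blk_def)

lemma prob_NG:
  assumes s: "s = 1 \<or> s = -1"
  shows "P.prob (NG s N r m) = (1 - rh ^ (2 * r + 1)) ^ m"
proof (induction m)
  case 0
  have "NG s N r 0 = space M" by (simp add: NG_def space_M)
  then show ?case by (simp add: P.P.prob_space)
next
  case (Suc m)
  have eq: "NG s N r (Suc m) = NG s N r m \<inter> (space M - Gs s N r m)"
    by (auto simp: NG_def Gs_def space_M less_Suc_eq)
  have dNG: "dep (\<Union>i<m. blk s N r i) (NG s N r m)"
    unfolding NG_def by (rule dep_eta) auto
  have dG: "dep (blk s N r m) (space M - Gs s N r m)"
  proof -
    have "space M - Gs s N r m = {\<omega>. \<not> (\<forall>t\<in>blk s N r m. eta \<omega> t = -1)}" by (auto simp: space_M Gs_def)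
    then show ?thesis by (simp add: dep_eta)
  qed
  have disj: "(\<Union>i<m. blk s N r i) \<inter> blk s N r m = {}"
  proof -
    have "blk s N r i \<inter> blk s N r m = {}" if "i < m" for i using blk_disj[OF s that] .
    then show ?thesis by blast
  qed
  have "P.prob (NG s N r (Suc m)) = P.prob (NG s N r m) * P.prob (space M - Gs s N r m)"
    unfolding eq by (rule indep2[OF disj meas_NG _ dNG dG]) (use meas_G in auto)
  also have "P.prob (space M - Gs s N r m) = 1 - rh ^ (2 * r + 1)"
    using P.prob_compl[OF meas_G] prob_G by simp
  finally show ?case using Suc.IH by simp
qed

lemma prob_GB:
  assumes s: "s = 1 \<or> s = -1"
  shows "P.prob (Gs s N r i \<inter> BLs s N r i) \<le> rh ^ (2 * r + 1) * (rb/rh) ^ (r+1)"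
    and "P.prob (Gs s N r i \<inter> BRs s N r i) \<le> rh ^ (2 * r + 1) * (rb/rh) ^ (r+1)"
proof -
  define e where "e = s * uu N r i"
  have dG: "dep (blk s N r i) (Gs s N r i)" unfolding Gs_def by (rule dep_eta) auto
  have bL: "P.prob (BLs s N r i) \<le> (rb/rh) ^ (r+1)"
    using Bd_bound[of "-1" "e - int r" "Suc r"] unfolding BLs_def e_def by (simp add: add.commute)
  have bR: "P.prob (BRs s N r i) \<le> (rb/rh) ^ (r+1)"
    using Bd_bound[of "1" "e + int r" "Suc r"] unfolding BRs_def e_def by (simp add: add.commute)
  have d1: "blk s N r i \<inter> (\<lambda>t. (e - int r) + (-1) * int t) ` {1..} = {}"
    unfolding blk_def e_def by auto
  have d2: "blk s N r i \<inter> (\<lambda>t. (e + int r) + 1 * int t) ` {1..} = {}"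
    unfolding blk_def e_def by auto
  have dL: "dep ((\<lambda>t. (e - int r) + (-1) * int t) ` {1..}) (BLs s N r i)"
    unfolding BLs_def e_def by (rule dep_Bd)
  have dR: "dep ((\<lambda>t. (e + int r) + 1 * int t) ` {1..}) (BRs s N r i)"
    unfolding BRs_def e_def by (rule dep_Bd)
  have "P.prob (Gs s N r i \<inter> BLs s N r i) = P.prob (Gs s N r i) * P.prob (BLs s N r i)"
    by (rule indep2[OF d1 meas_G _ dG dL]) (auto simp: BLs_def meas_Bd)
  also have "\<dots> \<le> rh ^ (2 * r + 1) * (rb/rh) ^ (r+1)"
    unfolding prob_G by (rule mult_left_mono[OF bL]) (use rh_pos in simp)
  finally show "P.prob (Gs s N r i \<inter> BLs s N r i) \<le> rh ^ (2 * r + 1) * (rb/rh) ^ (r+1)" .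
  have "P.prob (Gs s N r i \<inter> BRs s N r i) = P.prob (Gs s N r i) * P.prob (BRs s N r i)"
    by (rule indep2[OF d2 meas_G _ dG dR]) (auto simp: BRs_def meas_Bd)
  also have "\<dots> \<le> rh ^ (2 * r + 1) * (rb/rh) ^ (r+1)"
    unfolding prob_G by (rule mult_left_mono[OF bR]) (use rh_pos in simp)
  finally show "P.prob (Gs s N r i \<inter> BRs s N r i) \<le> rh ^ (2 * r + 1) * (rb/rh) ^ (r+1)" .
qed

lemma meas_UU: "UU s N r m \<in> sets M"
  unfolding UU_def BLs_def BRs_def using meas_NG meas_G meas_Bd by auto

lemma prob_UU:
  assumes s: "s = 1 \<or> s = -1"
  shows "P.prob (UU s N r m) \<le> (1 - rh ^ (2 * r + 1)) ^ m + 2 * real m * rh ^ (2 * r + 1) * (rb/rh) ^ (r+1)"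
proof -
  define g where "g = rh ^ (2 * r + 1) * (rb/rh) ^ (r+1)"
  have mL: "(\<Union>i<m. Gs s N r i \<inter> BLs s N r i) \<in> sets M" unfolding BLs_def using meas_G meas_Bd by auto
  have mR: "(\<Union>i<m. Gs s N r i \<inter> BRs s N r i) \<in> sets M" unfolding BRs_def using meas_G meas_Bd by auto
  have u1: "P.prob (UU s N r m) \<le> P.prob (NG s N r m) + P.prob (\<Union>i<m. Gs s N r i \<inter> BLs s N r i)
        + P.prob (\<Union>i<m. Gs s N r i \<inter> BRs s N r i)"
    unfolding UU_def using meas_NG mL mR by (smt (verit) measure_Un_le sets.Un)
  have u2: "P.prob (\<Union>i<m. Gs s N r i \<inter> BLs s N r i) \<le> (\<Sum>i<m. P.prob (Gs s N r i \<inter> BLs s N r i))"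
    by (rule P.finite_measure_subadditive_finite) (auto simp: BLs_def intro: meas_G meas_Bd)
  have u3: "(\<Sum>i<m. P.prob (Gs s N r i \<inter> BLs s N r i)) \<le> (\<Sum>i<m. g)" unfolding g_def by (rule sum_mono) (rule prob_GB(1)[OF s])
  have u4: "P.prob (\<Union>i<m. Gs s N r i \<inter> BRs s N r i) \<le> (\<Sum>i<m. P.prob (Gs s N r i \<inter> BRs s N r i))"
    by (rule P.finite_measure_subadditive_finite) (auto simp: BRs_def intro: meas_G meas_Bd)
  have u5: "(\<Sum>i<m. P.prob (Gs s N r i \<inter> BRs s N r i)) \<le> (\<Sum>i<m. g)" unfolding g_def by (rule sum_mono) (rule prob_GB(2)[OF s])
  have "P.prob (UU s N r m) \<le> P.prob (NG s N r m) + (\<Sum>i<m. g) + (\<Sum>i<m. g)"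
    using u1 u2 u3 u4 u5 by linarith
  moreover have "(\<Sum>i<m. g) = real m * g" by simp
  ultimately have "P.prob (UU s N r m) \<le> (1 - rh ^ (2 * r + 1)) ^ m + 2 * (real m * g)"
    using prob_NG[OF s, of N r m] by linarith
  moreover have "2 * (real m * g) = 2 * real m * rh ^ (2 * r + 1) * (rb/rh) ^ (r+1)"
    unfolding g_def by (simp only: mult.assoc)
  ultimately show ?thesis by simp
qed

end


context golf
begin

lemma AE_sep:
  assumes s: "s = 1 \<or> s = -1"
  shows "AE \<omega> in M. \<forall>N. \<exists>v. int N < s * v \<and> separator \<omega> v"
proof -
  have "AE \<omega> in M. \<exists>v. int N < s * v \<and> separator \<omega> v" for N
  proof -
    define Z where "Z = (\<Inter>r. \<Inter>m. UU s N r m)"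
    have mZ: "Z \<in> sets M" unfolding Z_def
      by (intro sets.countable_INT) (auto intro!: sets.countable_INT meas_UU)
    have pZ: "P.prob Z \<le> 0"
    proof (rule limit_zero[OF c_nonneg c_less1 rh_pos])
      show "rh \<le> 1" using s1 b0 by linarith
    next
      fix r m
      have "P.prob Z \<le> P.prob (UU s N r m)" by (rule P.finite_measure_mono) (auto simp: Z_def meas_UU)
      also have "\<dots> \<le> (1 - rh ^ (2 * r + 1)) ^ m + 2 * real m * rh ^ (2 * r + 1) * (rb/rh) ^ (r+1)"
        by (rule prob_UU[OF s])
      finally show "P.prob Z \<le> (1 - rh ^ (2 * r + 1)) ^ m + 2 * real m * rh ^ (2 * r + 1) * (rb/rh) ^ (r+1)" .
    qed
    have "P.prob Z = 0" using pZ measure_nonneg[of M Z] by linarith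
    then have "Z \<in> null_sets M" using mZ by (simp add: null_sets_def P.emeasure_eq_measure)
    moreover have "{\<omega> \<in> space M. \<not> (\<exists>v. int N < s * v \<and> separator \<omega> v)} \<subseteq> Z"
      using NoSep_sub[OF s] unfolding NoSep_def Z_def by blast
    ultimately show ?thesis by (rule AE_I')
  qed
  then show ?thesis by (simp add: AE_all_countable)
qed

lemma AE_vals: "AE \<omega> in M. \<forall>x. eta \<omega> x \<in> {-1,0,1}"
proof -
  have "AE \<omega> in M. eta \<omega> x \<in> {-1,0,1}" for x
  proof -
    define A1 where "A1 = {\<omega>. eta \<omega> x = 1}"
    define A0 where "A0 = {\<omega>. eta \<omega> x = 0}"
    define Am where "Am = {\<omega>. eta \<omega> x = -1}"
    define R where "R = space M - (A1 \<union> A0 \<union> Am)"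
    have mA: "A1 \<in> sets M" "A0 \<in> sets M" "Am \<in> sets M" unfolding A1_def A0_def Am_def by (auto intro: meas_eta)
    have pA: "P.prob A1 = rb" "P.prob A0 = 1 - rb - rh" "P.prob Am = rh"
      unfolding A1_def A0_def Am_def by (auto simp: prob_eta pm_def)
    have dj: "A1 \<inter> A0 = {}" "(A1 \<union> A0) \<inter> Am = {}" by (auto simp: A1_def A0_def Am_def)
    have "P.prob (A1 \<union> A0 \<union> Am) = P.prob (A1 \<union> A0) + P.prob Am"
      by (rule P.finite_measure_Union) (use mA dj in auto)
    also have "P.prob (A1 \<union> A0) = P.prob A1 + P.prob A0"
      by (rule P.finite_measure_Union) (use mA dj in auto)
    finally have "P.prob (A1 \<union> A0 \<union> Am) = 1" using pA by simp
    then have "P.prob R = 0" unfolding R_def using P.prob_compl[of "A1 \<union> A0 \<union> Am"] mA by simp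
    moreover have "R \<in> sets M" unfolding R_def using mA by auto
    ultimately have "R \<in> null_sets M" by (simp add: null_sets_def P.emeasure_eq_measure)
    moreover have "{\<omega> \<in> space M. \<not> eta \<omega> x \<in> {-1,0,1}} \<subseteq> R"
      unfolding R_def A1_def A0_def Am_def by auto
    ultimately show ?thesis by (rule AE_I')
  qed
  then show ?thesis by (simp add: AE_all_countable)
qed

theorem main_loc:
  "AE \<omega> in M. (\<forall>v. separator \<omega> v \<longrightarrow> v \<in> H1 \<omega>)
     \<and> infinite {x \<in> H1 \<omega>. x < 0} \<and> infinite {x \<in> H1 \<omega>. x > 0}"
proof -
  have a1: "AE \<omega> in M. \<forall>N. \<exists>v. int N < 1 * v \<and> separator \<omega> v" by (rule AE_sep) simp
  have a2: "AE \<omega> in M. \<forall>N. \<exists>v. int N < -1 * v \<and> separator \<omega> v" by (rule AE_sep) simp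
  show ?thesis
  using AE_vals a1 a2
proof eventually_elim
  case (elim \<omega>)
  have A: "\<forall>v. separator \<omega> v \<longrightarrow> v \<in> H1 \<omega>"
  proof (intro allI impI)
    fix v assume "separator \<omega> v"
    then show "v \<in> H1 \<omega>" by (rule sep_H1[rotated]) (use elim(1) in blast)
  qed
  have L: "infinite {x \<in> H1 \<omega>. x < 0}"
  proof
    assume fin: "finite {x \<in> H1 \<omega>. x < 0}"
    then have "bdd_below {x \<in> H1 \<omega>. x < 0}" by (rule bdd_below_finite)
    then obtain B where B: "\<And>x. x \<in> {x \<in> H1 \<omega>. x < 0} \<Longrightarrow> B \<le> x" unfolding bdd_below_def by blast
    obtain v where v: "int (nat (-B)) < -1 * v" "separator \<omega> v" using elim(3) by blast
    have "v \<in> H1 \<omega>" using A v by blast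
    moreover have "v < 0" using v(1) by (simp split: if_splits)
    ultimately have "B \<le> v" using B by blast
    moreover have "v < B" using v(1) by (simp split: if_splits)
    ultimately show False by simp
  qed
  have R: "infinite {x \<in> H1 \<omega>. x > 0}"
  proof
    assume fin: "finite {x \<in> H1 \<omega>. x > 0}"
    then have "bdd_above {x \<in> H1 \<omega>. x > 0}" by (rule bdd_above_finite)
    then obtain B where B: "\<And>x. x \<in> {x \<in> H1 \<omega>. x > 0} \<Longrightarrow> x \<le> B" unfolding bdd_above_def by blast
    obtain v where v: "int (nat B) < 1 * v" "separator \<omega> v" using elim(2) by blast
    have "v \<in> H1 \<omega>" using A v by blast
    moreover have "v > 0" using v(1) by (simp split: if_splits)
    ultimately have "v \<le> B" using B by blast
    moreover have "B < v" using v(1) by (simp split: if_splits)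
    ultimately show False by simp
  qed
  show ?case using A L R by blast
qed
qed

end

theorem mainTheorem19:
  fixes \<rho>b \<rho>h p :: real
  assumes "0 \<le> \<rho>b" and "\<rho>b < \<rho>h" and "\<rho>b + \<rho>h \<le> 1"
    and "0 \<le> p" and "p \<le> 1"
  shows "AE \<omega> in golf_space \<rho>b \<rho>h p.
           (\<forall>v. separator \<omega> v \<longrightarrow> v \<in> H1 \<omega>)
         \<and> infinite {x \<in> H1 \<omega>. x < 0} \<and> infinite {x \<in> H1 \<omega>. x > 0}"
proof -
  interpret golf \<rho>b \<rho>h p using assms by unfold_locales auto
  show ?thesis unfolding golf_space_def by (rule main_loc)
qed


end
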